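(* There are infinitely many mixed graphs $M_G$ with $\operatorname{rank} N(M_G)=2$ which are not determined by their spectrum.
   Context: A mixed graph $M_G$ is obtained from a finite simple graph $G$ by orienting the edges of some subset of $E(G)$. With $\omega=\frac{1+\mathbf{i}\sqrt3}{2}$, $N(M_G)$ has $(u,v)$-entry $\omega$ if $\overrightarrow{uv}$ is an arc, $\bar\omega$ if $\overrightarrow{vu}$ is an arc, $1$ for an undirected edge, $0$ otherwise; cospectral means same eigenvalue multiset of $N$. Mixed graphs are considered up to isomorphism. $\mathbb{T}_6=\{1,-1,\omega,\bar\omega,-\omega,-\bar\omega\}$. Given a partition $V(M_G)=\bigcup_{j\in\mathbb{T}_6}V_j$ into six possibly empty sets, an edge or arc $xy$ has type $(j,k)$ if $x\in V_j,y\in V_k$ (arcs directed from $x$ to $y$). The partition is admissible if every undirected edge has type $(j,j)$ or $(j,\omega j)$, and every arc has type $(j,j)$, $(j,\bar\omega j)$ or $(j,-\omega j)$, for some $j$. A three-way switching w.r.t. an admissible partition replaces each undirected edge of type $(j,\omega j)$ by an arc from $V_j$ to $V_{\omega j}$, replaces each arc of type $(j,\bar\omega j)$ by an undirected edge, and reverses each arc of type $(j,-\omega j)$. The converse reverses all arcs. Two mixed graphs are switching equivalent if one is obtained from the other by a sequence of three-way switchings and taking converses. A mixed graph is determined by its spectrum if it is switching equivalent to every mixed graph cospectral with it. *)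

theory Defs
  imports "Jordan_Normal_Form.Char_Poly" "Jordan_Normal_Form.DL_Rank"
    "HOL-Computational_Algebra.Fundamental_Theorem_Algebra"
begin

text \<open>A mixed graph on the vertex set {0..<n}: undirected edges (symmetric) and arcs.\<close>
record mgraph =
  nv :: nat
  edge :: "nat \<Rightarrow> nat \<Rightarrow> bool"
  arc :: "nat \<Rightarrow> nat \<Rightarrow> bool"

definition wf_mgraph :: "mgraph \<Rightarrow> bool" where
  "wf_mgraph M \<longleftrightarrow>
     (\<forall>u v. edge M u v \<longrightarrow> u < nv M \<and> v < nv M \<and> u \<noteq> v \<and> edge M v u) \<and>
     (\<forall>u v. arc M u v \<longrightarrow> u < nv M \<and> v < nv M \<and> u \<noteq> v \<and> \<not> arc M v u \<and> \<not> edge M u v)"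

definition omega :: complex where
  "omega = Complex (1/2) (sqrt 3 / 2)"

definition T6 :: "complex set" where
  "T6 = {1, -1, omega, cnj omega, - omega, - cnj omega}"

definition Nmat :: "mgraph \<Rightarrow> complex mat" where
  "Nmat M = mat (nv M) (nv M) (\<lambda>(i, j).
     if edge M i j then 1 else if arc M i j then omega else if arc M j i then cnj omega else 0)"

definition spectrum_mg :: "mgraph \<Rightarrow> complex multiset" where
  "spectrum_mg M = proots (char_poly (Nmat M))"

definition cospectral :: "mgraph \<Rightarrow> mgraph \<Rightarrow> bool" where
  "cospectral M M' \<longleftrightarrow> spectrum_mg M = spectrum_mg M'"

definition mrank :: "mgraph \<Rightarrow> nat" where
  "mrank M = vec_space.rank (nv M) (Nmat M)"

definition mg_iso :: "mgraph \<Rightarrow> mgraph \<Rightarrow> bool" where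
  "mg_iso M M' \<longleftrightarrow> nv M = nv M' \<and>
     (\<exists>f. bij_betw f {..<nv M} {..<nv M'} \<and>
        (\<forall>u<nv M. \<forall>v<nv M. (edge M u v \<longleftrightarrow> edge M' (f u) (f v)) \<and>
                           (arc M u v \<longleftrightarrow> arc M' (f u) (f v))))"

text \<open>A partition V = union of V_j (j in T6) is encoded by p, with V_j = {v. p v = j}.\<close>
definition admissible :: "mgraph \<Rightarrow> (nat \<Rightarrow> complex) \<Rightarrow> bool" where
  "admissible M p \<longleftrightarrow> (\<forall>v<nv M. p v \<in> T6) \<and>
     (\<forall>u v. edge M u v \<longrightarrow> p v = p u \<or> p v = omega * p u \<or> p u = omega * p v) \<and>
     (\<forall>u v. arc M u v \<longrightarrow> p v = p u \<or> p v = cnj omega * p u \<or> p v = - omega * p u)"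

definition three_way_switch :: "(nat \<Rightarrow> complex) \<Rightarrow> mgraph \<Rightarrow> mgraph" where
  "three_way_switch p M = \<lparr> nv = nv M,
     edge = (\<lambda>u v. (edge M u v \<and> p u = p v) \<or>
                   (arc M u v \<and> p v = cnj omega * p u) \<or> (arc M v u \<and> p u = cnj omega * p v)),
     arc = (\<lambda>u v. (edge M u v \<and> p v = omega * p u) \<or> (arc M u v \<and> p v = p u) \<or>
                  (arc M v u \<and> p u = - omega * p v)) \<rparr>"

definition mg_converse :: "mgraph \<Rightarrow> mgraph" where
  "mg_converse M = \<lparr> nv = nv M, edge = edge M, arc = (\<lambda>u v. arc M v u) \<rparr>"

text \<open>One step: a three-way switching, taking the converse, or an isomorphism
  (mixed graphs are considered up to isomorphism).\<close>
definition sw_step :: "mgraph \<Rightarrow> mgraph \<Rightarrow> bool" where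
  "sw_step M M' \<longleftrightarrow> (\<exists>p. admissible M p \<and> M' = three_way_switch p M) \<or>
     M' = mg_converse M \<or> mg_iso M M'"

definition switching_equivalent :: "mgraph \<Rightarrow> mgraph \<Rightarrow> bool" where
  "switching_equivalent M M' \<longleftrightarrow> sw_step\<^sup>*\<^sup>* M M' \<or> sw_step\<^sup>*\<^sup>* M' M"

definition determined_by_spectrum :: "mgraph \<Rightarrow> bool" where
  "determined_by_spectrum M \<longleftrightarrow>
     (\<forall>M'. wf_mgraph M' \<and> cospectral M M' \<longrightarrow> switching_equivalent M M')"

end

theory Submission
  imports Defs
begin

definition starG :: "nat \<Rightarrow> mgraph" where
 "starG k = \<lparr>nv = k+5, edge = (\<lambda>u v. (u = 0 \<and> 1 \<le> v \<and> v \<le> 4) \<or> (v = 0 \<and> 1 \<le> u \<and> u \<le> 4)), arc = (\<lambda>u v. False)\<rparr>"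
definition cycG :: "nat \<Rightarrow> mgraph" where
 "cycG k = \<lparr>nv = k+5, edge = (\<lambda>u v. u < 4 \<and> v < 4 \<and> odd (u+v)), arc = (\<lambda>u v. False)\<rparr>"

lemma Nmat_starG: "Nmat (starG k) = four_block_mat (Nmat (starG 0)) (0\<^sub>m 5 k) (0\<^sub>m k 5) (0\<^sub>m k k)"
  by (rule eq_matI) (auto simp: Nmat_def starG_def four_block_mat_def)

lemma Nmat_cycG: "Nmat (cycG k) = four_block_mat (Nmat (cycG 0)) (0\<^sub>m 5 k) (0\<^sub>m k 5) (0\<^sub>m k k)"
  by (rule eq_matI) (auto simp: Nmat_def cycG_def four_block_mat_def)

definition P5 :: "complex mat" where
 "P5 = mat 5 5 (\<lambda>(i,j). [[0,1,0,1,0],[1,0,0,0,0],[0,1/2,1,-1/2,0],[1/2,-1/2,1/2,1/2,1],[1/2,0,1/2,0,-1]] ! i ! j)"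
definition Q5 :: "complex mat" where
 "Q5 = mat 5 5 (\<lambda>(i,j). [[0,1,0,0,0],[1/2,1/2,1/2,-1/2,-1/2],[0,-1/2,1/2,1/2,1/2],[1/2,-1/2,-1/2,1/2,1/2],[0,1/4,1/4,1/4,-3/4]] ! i ! j)"

lemma less5: "(i::nat) < 5 \<longleftrightarrow> i = 0 \<or> i = 1 \<or> i = 2 \<or> i = 3 \<or> i = 4" by auto

lemma mat5_eqI:
  assumes "A \<in> carrier_mat 5 5" "B \<in> carrier_mat 5 5"
   "\<forall>i<5. \<forall>j<5. A $$ (i,j) = B $$ (i,j)"
  shows "A = B"
proof (rule eq_matI)
  fix i j assume "i < dim_row B" "j < dim_col B"
  then have "i < 5" "j < 5" using assms(2) by auto
  then show "A $$ (i,j) = B $$ (i,j)" using assms(3) by blast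
qed (use assms in auto)

lemma P5c: "P5 \<in> carrier_mat 5 5" by (simp add: P5_def)
lemma Q5c: "Q5 \<in> carrier_mat 5 5" by (simp add: Q5_def)

lemma mult5: assumes "A \<in> carrier_mat 5 5" "B \<in> carrier_mat 5 5" "i < 5" "j < 5"
  shows "(A * B) $$ (i,j) = A$$(i,0)*B$$(0,j) + A$$(i,1)*B$$(1,j) + A$$(i,2)*B$$(2,j) + A$$(i,3)*B$$(3,j) + A$$(i,4)*B$$(4,j)"
  using assms by (simp add: scalar_prod_def eval_nat_numeral sum.atLeast0_lessThan_Suc algebra_simps)

definition pl :: "complex list list" where "pl = [[0,1,0,1,0],[1,0,0,0,0],[0,1/2,1,-1/2,0],[1/2,-1/2,1/2,1/2,1],[1/2,0,1/2,0,-1]]"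
definition ql :: "complex list list" where "ql = [[0,1,0,0,0],[1/2,1/2,1/2,-1/2,-1/2],[0,-1/2,1/2,1/2,1/2],[1/2,-1/2,-1/2,1/2,1/2],[0,1/4,1/4,1/4,-3/4]]"

lemma P5e: "i < 5 \<Longrightarrow> j < 5 \<Longrightarrow> P5 $$ (i,j) = pl ! i ! j" by (simp add: P5_def pl_def)
lemma Q5e: "i < 5 \<Longrightarrow> j < 5 \<Longrightarrow> Q5 $$ (i,j) = ql ! i ! j" by (simp add: Q5_def ql_def)

lemma all5: "(\<forall>i<(5::nat). P i) \<longleftrightarrow> P 0 \<and> P 1 \<and> P 2 \<and> P 3 \<and> P 4"
  by (auto simp: less5)

lemma PQ: "P5 * Q5 = 1\<^sub>m 5"
  apply (rule mat5_eqI[OF mult_carrier_mat[OF P5c Q5c] one_carrier_mat])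
  apply (simp only: all5)
  apply (simp add: mult5 P5c Q5c P5e Q5e)
  apply (simp add: pl_def ql_def)
  done
lemma QP: "Q5 * P5 = 1\<^sub>m 5"
  apply (rule mat5_eqI[OF mult_carrier_mat[OF Q5c P5c] one_carrier_mat])
  apply (simp only: all5)
  apply (simp add: mult5 P5c Q5c P5e Q5e)
  apply (simp add: pl_def ql_def)
  done

lemma A0c: "Nmat (starG 0) \<in> carrier_mat 5 5" by (simp add: Nmat_def starG_def)
lemma B0c: "Nmat (cycG 0) \<in> carrier_mat 5 5" by (simp add: Nmat_def cycG_def)

lemma AP: "Nmat (starG 0) * P5 = P5 * Nmat (cycG 0)"
  apply (rule mat5_eqI[OF mult_carrier_mat[OF A0c P5c] mult_carrier_mat[OF P5c B0c]])
  apply (simp only: all5)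
  apply (simp add: mult5 P5c A0c B0c P5e)
  apply (simp add: pl_def Nmat_def starG_def cycG_def)
  done

lemma sim0: "similar_mat_wit (Nmat (starG 0)) (Nmat (cycG 0)) P5 Q5"
proof -
  have "P5 * Nmat (cycG 0) * Q5 = Nmat (starG 0) * P5 * Q5" by (simp add: AP)
  also have "\<dots> = Nmat (starG 0) * (P5 * Q5)" using A0c P5c Q5c by (simp add: assoc_mult_mat)
  also have "\<dots> = Nmat (starG 0)" using A0c by (simp add: PQ)
  finally show ?thesis unfolding similar_mat_wit_def Let_def
    using A0c B0c P5c Q5c PQ QP by (simp add: Nmat_def starG_def)
qed

lemma cosp: "cospectral (starG k) (cycG k)"
proof -
  have "similar_mat_wit (Nmat (starG k)) (Nmat (cycG k))
    (four_block_mat P5 (0\<^sub>m 5 k) (0\<^sub>m k 5) (1\<^sub>m k)) (four_block_mat Q5 (0\<^sub>m 5 k) (0\<^sub>m k 5) (1\<^sub>m k))"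
    unfolding Nmat_starG[of k] Nmat_cycG[of k]
    apply (rule similar_mat_wit_four_block[OF sim0 similar_mat_wit_refl[of "0\<^sub>m k k" k]])
    using P5c Q5c A0c by auto
  then have "similar_mat (Nmat (starG k)) (Nmat (cycG k))" unfolding similar_mat_def by blast
  then show ?thesis unfolding cospectral_def spectrum_mg_def by (simp add: char_poly_similar)
qed

lemma rank_star: "mrank (starG k) = 2"
proof -
  let ?n = "k+5"
  interpret vs: vec_space "TYPE(complex)" ?n .
  let ?N = "Nmat (starG k)"
  have Nc: "?N \<in> carrier_mat ?n ?n" by (simp add: Nmat_def starG_def)
  define E1 where "E1 = mat ?n ?n (\<lambda>(i,j). (if i = 0 then 1 else 0) * (if 1 \<le> j \<and> j \<le> 4 then 1 else 0 :: complex))"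
  define E2 where "E2 = mat ?n ?n (\<lambda>(i,j). (if 1 \<le> i \<and> i \<le> 4 then 1 else 0) * (if j = 0 then 1 else 0 :: complex))"
  have E1c: "E1 \<in> carrier_mat ?n ?n" and E2c: "E2 \<in> carrier_mat ?n ?n" by (simp_all add: E1_def E2_def)
  have NE: "?N = E1 + E2"
    by (rule eq_matI) (auto simp: E1_def E2_def Nmat_def starG_def)
  have r1: "vs.rank E1 \<le> 1"
    by (rule vs.rank_le_1_product_entries[OF E1c, of "\<lambda>i. if i = 0 then 1 else 0" "\<lambda>j. if 1 \<le> j \<and> j \<le> 4 then 1 else 0"])
      (simp add: E1_def)
  have r2: "vs.rank E2 \<le> 1"
    by (rule vs.rank_le_1_product_entries[OF E2c, of "\<lambda>i. if 1 \<le> i \<and> i \<le> 4 then 1 else 0" "\<lambda>j. if j = 0 then 1 else 0"])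
      (simp add: E2_def)
  have up: "vs.rank ?N \<le> 2"
    using vs.rank_subadditive[OF E1c E2c] r1 r2 NE by simp
  let ?c0 = "col ?N 0" and ?c1 = "col ?N 1"
  have c0: "?c0 \<in> carrier_vec ?n" and c1: "?c1 \<in> carrier_vec ?n" by (rule col_carrier_vec[OF _ Nc], simp)+
  have e00: "?c0 $ 0 = 0" and e01: "?c1 $ 0 = 1" and e10: "?c0 $ 1 = 1" and e11: "?c1 $ 1 = 0"
    by (simp_all add: Nmat_def starG_def)
  have dist: "?c0 \<noteq> ?c1" using e00 e01 by auto
  have sub: "{?c0, ?c1} \<subseteq> set (cols ?N)"
    using Nc by (auto simp: cols_def)
  define B where "B = mat_of_cols ?n [?c0, ?c1]"
  have Bc: "B \<in> carrier_mat ?n 2" unfolding B_def using mat_of_cols_carrier(1)[of ?n "[?c0, ?c1]"] by (simp add: numeral_2_eq_2)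
  have colsB: "cols B = [?c0, ?c1]" unfolding B_def using c0 c1 by (subst cols_mat_of_cols) auto
  have indpt: "vs.lin_indpt {?c0, ?c1}"
  proof
    assume "vs.lin_dep {?c0, ?c1}"
    then have "vs.lin_dep (set (cols B))" using colsB by simp
    then obtain v where v: "v \<in> carrier_vec 2" "v \<noteq> 0\<^sub>v 2" "B *\<^sub>v v = 0\<^sub>v ?n"
      using vs.lin_depE[OF Bc] colsB dist by auto
    have "(B *\<^sub>v v) $ 0 = v $ 1" "(B *\<^sub>v v) $ 1 = v $ 0"
      using v(1) e00 e01 e10 e11 unfolding B_def
      by (auto simp: scalar_prod_def mat_of_cols_def eval_nat_numeral)
    then have "v $ 0 = 0" "v $ 1 = 0" using v(3) by auto
    then have "v = 0\<^sub>v 2" using v(1) by (auto simp: eval_nat_numeral less_Suc_eq intro!: eq_vecI)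
    then show False using v(2) by simp
  qed
  have "vs.rank ?N \<ge> card {?c0, ?c1}"
    by (rule vs.rank_ge_card_indpt[OF Nc sub indpt])
  then have "vs.rank ?N \<ge> 2" using dist by simp
  then show ?thesis using up unfolding mrank_def by (simp add: starG_def)
qed

definition und :: "mgraph \<Rightarrow> nat \<Rightarrow> nat \<Rightarrow> bool" where
  "und M u v \<longleftrightarrow> edge M u v \<or> edge M v u \<or> arc M u v \<or> arc M v u"
definition symE :: "mgraph \<Rightarrow> bool" where
  "symE M \<longleftrightarrow> (\<forall>u<nv M. \<forall>v<nv M. edge M u v \<longrightarrow> edge M v u)"
definition star3 :: "mgraph \<Rightarrow> bool" where
  "star3 M \<longleftrightarrow> (\<exists>u v1 v2 v3. u < nv M \<and> v1 < nv M \<and> v2 < nv M \<and> v3 < nv M \<and>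
     v1 \<noteq> v2 \<and> v1 \<noteq> v3 \<and> v2 \<noteq> v3 \<and> und M u v1 \<and> und M u v2 \<and> und M u v3)"

lemma switch_und:
  assumes adm: "admissible M p" and s: "symE M" and u: "u < nv M" and v: "v < nv M"
  shows "und (three_way_switch p M) u v \<longleftrightarrow> und M u v"
proof
  assume "und (three_way_switch p M) u v"
  then show "und M u v" unfolding und_def three_way_switch_def by auto
next
  assume h: "und M u v"
  have e: "\<And>a b. a < nv M \<Longrightarrow> b < nv M \<Longrightarrow> edge M a b \<Longrightarrow> und (three_way_switch p M) a b"
  proof -
    fix a b assume a: "a < nv M" and b: "b < nv M" and ab: "edge M a b"
    have ba: "edge M b a" using s a b ab unfolding symE_def by blast
    from adm ab have "p b = p a \<or> p b = omega * p a \<or> p a = omega * p b" unfolding admissible_def by blast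
    then show "und (three_way_switch p M) a b" using ab ba unfolding und_def three_way_switch_def by auto
  qed
  have r: "\<And>a b. arc M a b \<Longrightarrow> und (three_way_switch p M) a b"
  proof -
    fix a b assume ab: "arc M a b"
    from adm ab have "p b = p a \<or> p b = cnj omega * p a \<or> p b = - omega * p a" unfolding admissible_def by blast
    then show "und (three_way_switch p M) a b" using ab unfolding und_def three_way_switch_def by auto
  qed
  have sym: "\<And>a b. und (three_way_switch p M) a b \<Longrightarrow> und (three_way_switch p M) b a"
    unfolding und_def by blast
  from h consider "edge M u v" | "edge M v u" | "arc M u v" | "arc M v u" unfolding und_def by blast
  then show "und (three_way_switch p M) u v"
  proof cases
    case 1 then show ?thesis using e[OF u v] by simp
  next
    case 2 then show ?thesis using e[OF v u] sym by simp
  next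
    case 3 then show ?thesis using r[of u v] by simp
  next
    case 4 then show ?thesis using r[of v u] sym by simp
  qed
qed

lemma switch_symE:
  assumes s: "symE M" shows "symE (three_way_switch p M)"
  using s unfolding symE_def three_way_switch_def by auto

lemma step_inv:
  assumes st: "sw_step M M'" and s: "symE M"
  shows "symE M' \<and> (star3 M \<longleftrightarrow> star3 M')"
  using st unfolding sw_step_def
proof (elim disjE exE conjE)
  fix p assume adm: "admissible M p" and M': "M' = three_way_switch p M"
  have nv: "nv M' = nv M" using M' by (simp add: three_way_switch_def)
  have U: "\<And>u v. u < nv M \<Longrightarrow> v < nv M \<Longrightarrow> und M' u v \<longleftrightarrow> und M u v"
    using switch_und[OF adm s] M' by simp
  have "star3 M \<longleftrightarrow> star3 M'" unfolding star3_def nv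
  proof
    assume "\<exists>u v1 v2 v3. u < nv M \<and> v1 < nv M \<and> v2 < nv M \<and> v3 < nv M \<and>
     v1 \<noteq> v2 \<and> v1 \<noteq> v3 \<and> v2 \<noteq> v3 \<and> und M u v1 \<and> und M u v2 \<and> und M u v3"
    then show "\<exists>u v1 v2 v3. u < nv M \<and> v1 < nv M \<and> v2 < nv M \<and> v3 < nv M \<and>
     v1 \<noteq> v2 \<and> v1 \<noteq> v3 \<and> v2 \<noteq> v3 \<and> und M' u v1 \<and> und M' u v2 \<and> und M' u v3"
      using U by meson
  next
    assume "\<exists>u v1 v2 v3. u < nv M \<and> v1 < nv M \<and> v2 < nv M \<and> v3 < nv M \<and>
     v1 \<noteq> v2 \<and> v1 \<noteq> v3 \<and> v2 \<noteq> v3 \<and> und M' u v1 \<and> und M' u v2 \<and> und M' u v3"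
    then show "\<exists>u v1 v2 v3. u < nv M \<and> v1 < nv M \<and> v2 < nv M \<and> v3 < nv M \<and>
     v1 \<noteq> v2 \<and> v1 \<noteq> v3 \<and> v2 \<noteq> v3 \<and> und M u v1 \<and> und M u v2 \<and> und M u v3"
      using U by meson
  qed
  then show ?thesis using switch_symE[OF s] M' by simp
next
  assume M': "M' = mg_converse M"
  have "und M' = und M" unfolding M' mg_converse_def und_def by (auto intro!: ext)
  then show ?thesis using s unfolding M' star3_def symE_def by (auto simp: mg_converse_def)
next
  assume iso: "mg_iso M M'"
  then obtain f where nv: "nv M = nv M'" and bij: "bij_betw f {..<nv M} {..<nv M'}"
    and pr: "\<And>u v. u<nv M \<Longrightarrow> v<nv M \<Longrightarrow> (edge M u v \<longleftrightarrow> edge M' (f u) (f v)) \<and> (arc M u v \<longleftrightarrow> arc M' (f u) (f v))"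
    unfolding mg_iso_def by blast
  have surj: "\<And>x. x < nv M' \<Longrightarrow> \<exists>u<nv M. x = f u"
    using bij unfolding bij_betw_def by (metis imageE lessThan_iff)
  have into: "\<And>u. u < nv M \<Longrightarrow> f u < nv M'" using bij unfolding bij_betw_def by auto
  have inj: "\<And>u v. u < nv M \<Longrightarrow> v < nv M \<Longrightarrow> f u = f v \<Longrightarrow> u = v"
    using bij unfolding bij_betw_def inj_on_def by auto
  have U: "\<And>u v. u < nv M \<Longrightarrow> v < nv M \<Longrightarrow> und M' (f u) (f v) \<longleftrightarrow> und M u v"
    unfolding und_def using pr by blast
  have "symE M'" unfolding symE_def
  proof (intro allI impI)
    fix x y assume x: "x < nv M'" and y: "y < nv M'" and e: "edge M' x y"
    obtain u where u: "u < nv M" "x = f u" using surj x by blast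
    obtain v where v: "v < nv M" "y = f v" using surj y by blast
    show "edge M' y x" using e u v pr s unfolding symE_def by blast
  qed
  moreover have "star3 M \<longleftrightarrow> star3 M'"
  proof
    assume "star3 M"
    then obtain u v1 v2 v3 where h: "u < nv M" "v1 < nv M" "v2 < nv M" "v3 < nv M"
     "v1 \<noteq> v2" "v1 \<noteq> v3" "v2 \<noteq> v3" "und M u v1" "und M u v2" "und M u v3"
      unfolding star3_def by blast
    have "f u < nv M'" "f v1 < nv M'" "f v2 < nv M'" "f v3 < nv M'" using h into by auto
    moreover have "f v1 \<noteq> f v2" "f v1 \<noteq> f v3" "f v2 \<noteq> f v3" using h inj by metis+
    moreover have "und M' (f u) (f v1)" "und M' (f u) (f v2)" "und M' (f u) (f v3)" using h U by simp_all
    ultimately show "star3 M'" unfolding star3_def by blast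
  next
    assume "star3 M'"
    then obtain x y1 y2 y3 where h: "x < nv M'" "y1 < nv M'" "y2 < nv M'" "y3 < nv M'"
     "y1 \<noteq> y2" "y1 \<noteq> y3" "y2 \<noteq> y3" "und M' x y1" "und M' x y2" "und M' x y3"
      unfolding star3_def by blast
    obtain u where u: "u < nv M" "x = f u" using surj h(1) by blast
    obtain v1 where v1: "v1 < nv M" "y1 = f v1" using surj h(2) by blast
    obtain v2 where v2: "v2 < nv M" "y2 = f v2" using surj h(3) by blast
    obtain v3 where v3: "v3 < nv M" "y3 = f v3" using surj h(4) by blast
    have "v1 \<noteq> v2" "v1 \<noteq> v3" "v2 \<noteq> v3" using h u v1 v2 v3 by auto
    moreover have "und M u v1" "und M u v2" "und M u v3" using h u v1 v2 v3 U by auto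
    ultimately show "star3 M" unfolding star3_def using u v1 v2 v3 by blast
  qed
  ultimately show ?thesis by blast
qed

lemma steps_inv:
  assumes "sw_step\<^sup>*\<^sup>* M M'" and "symE M"
  shows "symE M' \<and> (star3 M \<longleftrightarrow> star3 M')"
  using assms
proof (induction rule: rtranclp_induct)
  case base then show ?case by simp
next
  case (step y z) then show ?case using step_inv by blast
qed

lemma star3_starG: "star3 (starG k)"
  unfolding star3_def und_def starG_def
  by (rule exI[of _ 0], rule exI[of _ 1], rule exI[of _ 2], rule exI[of _ 3]) simp

lemma less4: "(i::nat) < 4 \<longleftrightarrow> i = 0 \<or> i = 1 \<or> i = 2 \<or> i = 3" by auto

lemma cyc_nb: assumes "und (cycG k) u v"
  shows "v = (if even u then 1 else 0) \<or> v = (if even u then 3 else 2)"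
proof -
  have h: "u < 4" "v < 4" "odd (u+v)" using assms unfolding und_def cycG_def by (auto simp: add.commute)
  from h(1,2) have "(u = 0 \<or> u = 1 \<or> u = 2 \<or> u = 3) \<and> (v = 0 \<or> v = 1 \<or> v = 2 \<or> v = 3)"
    by (simp only: less4)
  then show ?thesis using h(3) by (elim conjE disjE) simp_all
qed

lemma not_star3_cycG: "\<not> star3 (cycG k)"
  unfolding star3_def using cyc_nb by metis

lemma symE_starG: "symE (starG k)" unfolding symE_def starG_def by auto
lemma symE_cycG: "symE (cycG k)" unfolding symE_def cycG_def by (auto simp: add.commute)

lemma not_sweq: "\<not> switching_equivalent (starG k) (cycG k)"
  unfolding switching_equivalent_def
  using steps_inv[of "starG k" "cycG k"] steps_inv[of "cycG k" "starG k"]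
    star3_starG not_star3_cycG symE_starG symE_cycG by blast

lemma wf_starG: "wf_mgraph (starG k)" unfolding wf_mgraph_def starG_def by auto
lemma wf_cycG: "wf_mgraph (cycG k)" unfolding wf_mgraph_def cycG_def by (auto simp: add.commute)

lemma not_ds: "\<not> determined_by_spectrum (starG k)"
  unfolding determined_by_spectrum_def using wf_cycG cosp not_sweq by blast

theorem proposition5p11:
  shows "infinite ({M. wf_mgraph M \<and> mrank M = 2 \<and> \<not> determined_by_spectrum M}
                   // {(M, M'). wf_mgraph M \<and> wf_mgraph M' \<and> mg_iso M M'})"
proof -
  let ?S = "{M. wf_mgraph M \<and> mrank M = 2 \<and> \<not> determined_by_spectrum M}"
  let ?R = "{(M, M'). wf_mgraph M \<and> wf_mgraph M' \<and> mg_iso M M'}"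
  define g where "g k = ?R `` {starG k}" for k
  have refl: "(starG k, starG k) \<in> ?R" for k
    using wf_starG unfolding mg_iso_def by (auto intro!: exI[of _ id])
  have mem: "g k \<in> ?S // ?R" for k
    unfolding g_def by (rule quotientI) (simp add: wf_starG rank_star not_ds)
  have "inj g"
  proof (rule injI)
    fix j k assume "g j = g k"
    then have "starG k \<in> g j" using refl[of k] unfolding g_def by auto
    then have "mg_iso (starG j) (starG k)" unfolding g_def by auto
    then show "j = k" unfolding mg_iso_def starG_def by simp
  qed
  then have "infinite (range g)" by (rule range_inj_infinite)
  moreover have "range g \<subseteq> ?S // ?R" using mem by auto
  ultimately show ?thesis using infinite_super by blast
qed

end
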